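(* Let $n\ge1$, $d\ge1$, $F_1,\dots,F_n:\mathbb{R}^d\to\mathbb{R}^d$, $F=\frac1n\sum_iF_i$, with $F$ $\mu$-strongly monotone ($\mu>0$) and each $F_i$ $L_i$-Lipschitz; let $z_*$ be the solution of $F(z_* )=0$, $L_{max}=\max_iL_i$, $\sigma_*^2=\frac1n\sum_i\|F_i(z_* )\|^2$, and $\gamma_{1,max}=\frac{\mu}{10L_{max}^2\sqrt{10n^2+2n+54}}$. Run SEG-RR (defined in the context) with epoch-dependent step sizes $\gamma_{2,k}=2\gamma_{1,k}$, where $\gamma_{1,k}=\gamma_{1,max}$ for $k<k^*:=\lceil\frac{64}{\mu^2\gamma_{1,max}^2}\rceil$ and $\gamma_{1,k}=\frac{4(2k+1)}{\mu(k+1)^2}$ for $k\ge k^*$. Then for $K\ge k^*$, $$\mathbb{E}\|z_0^{K+1}-z_*\|^2\le\frac{(k^* )^2e^{-\frac{\mu n\gamma_{1,max}}{4}}}{(K+1)^2}\|z_0-z_*\|^2+\frac{96L_{max}^2(29+n)\sigma_*^2}{\mu^2(K+1)^2}\Big(\gamma_{1,max}^2(k^* )^2+\frac{128}{\mu^2}K\Big).$$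
   Context: $\mu$-strongly monotone: $\langle F(z_1)-F(z_2),z_1-z_2\rangle\ge\mu\|z_1-z_2\|^2$. SEG-RR with epoch step sizes $\gamma_{1,k},\gamma_{2,k}>0$: set $z_0^0=z_0$; for each epoch $k=0,1,\dots$ draw a permutation $\pi^k$ of $\{1,\dots,n\}$ uniformly at random, independently of the past; for $i=0,\dots,n-1$ set $\bar z_i^k=z_i^k-\gamma_{2,k}F_{\pi_i^k}(z_i^k)$, $z_{i+1}^k=z_i^k-\gamma_{1,k}F_{\pi_i^k}(\bar z_i^k)$; then $z_0^{k+1}=z_n^k$. $\mathbb{E}$ is expectation over all permutations. *)

theory Defs
  imports "HOL-Analysis.Analysis" "HOL-Combinatorics.Permutations"
begin

text \<open>Operators are indexed by 0..n-1; a permutation of the operator indices is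
a function p with p permutes {..<n}.\<close>

fun seg_inner :: "(nat \<Rightarrow> 'a::real_normed_vector \<Rightarrow> 'a) \<Rightarrow> real \<Rightarrow> real \<Rightarrow> (nat \<Rightarrow> nat) \<Rightarrow> 'a \<Rightarrow> nat \<Rightarrow> 'a" where
  "seg_inner Fs g1 g2 p z 0 = z"
| "seg_inner Fs g1 g2 p z (Suc i) =
     (let zi = seg_inner Fs g1 g2 p z i;
          zb = zi - g2 *\<^sub>R Fs (p i) zi
      in zi - g1 *\<^sub>R Fs (p i) zb)"

text \<open>Start point of epoch k (z_0^k), given the permutations ps k of each epoch
and step sizes g1 k, g2 k.\<close>
fun seg_rr :: "nat \<Rightarrow> (nat \<Rightarrow> 'a::real_normed_vector \<Rightarrow> 'a) \<Rightarrow> (nat \<Rightarrow> real) \<Rightarrow> (nat \<Rightarrow> real)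
     \<Rightarrow> (nat \<Rightarrow> nat \<Rightarrow> nat) \<Rightarrow> 'a \<Rightarrow> nat \<Rightarrow> 'a" where
  "seg_rr n Fs g1 g2 ps z0 0 = z0"
| "seg_rr n Fs g1 g2 ps z0 (Suc k) = seg_inner Fs (g1 k) (g2 k) (ps k) (seg_rr n Fs g1 g2 ps z0 k) n"

text \<open>Expectation of a function of the permutations of epochs 0..K, where these
are independent and uniform over the permutations of {..<n}: uniform average over
the finite product set.\<close>
definition perm_seqs :: "nat \<Rightarrow> nat \<Rightarrow> (nat \<Rightarrow> nat \<Rightarrow> nat) set" where
  "perm_seqs n K = {..K} \<rightarrow>\<^sub>E {p. p permutes {..<n}}"

definition expect_perms :: "nat \<Rightarrow> nat \<Rightarrow> ((nat \<Rightarrow> nat \<Rightarrow> nat) \<Rightarrow> real) \<Rightarrow> real" where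
  "expect_perms n K X = (\<Sum>ps\<in>perm_seqs n K. X ps) / real (card (perm_seqs n K))"

end

theory Submission
  imports Defs
begin

abbreviation PS :: "nat \<Rightarrow> (nat \<Rightarrow> nat) set" where "PS n \<equiv> {p. p permutes {..<n}}"

lemma PS_swap_sum:
  assumes "a < n" "b < n"
  shows "(\<Sum>p\<in>PS n. f p) = (\<Sum>p\<in>PS n. f (p \<circ> Transposition.transpose a b))"
  by (rule sum.reindex_bij_witness[where i="\<lambda>p. p \<circ> Transposition.transpose a b" and j="\<lambda>p. p \<circ> Transposition.transpose a b"])
     (use assms in \<open>simp_all add: comp_assoc permutes_compose permutes_swap_id\<close>)

lemma PS_finite: "finite (PS n)" by (rule finite_permutations) simp

lemma PS_in: "p \<in> PS n \<Longrightarrow> j < n \<Longrightarrow> p j < n"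
  using permutes_in_image by fastforce

lemma PS_diag:
  fixes v :: "nat \<Rightarrow> 'a::real_inner"
  assumes "j < n"
  shows "(\<Sum>p\<in>PS n. (norm (v (p j)))\<^sup>2) = real (card (PS n)) * (\<Sum>a<n. (norm (v a))\<^sup>2) / real n"
proof -
  define C where "C j = (\<Sum>p\<in>PS n. (norm (v (p j)))\<^sup>2)" for j
  have eq: "C k = C 0" if "k < n" for k
  proof -
    have "C k = (\<Sum>p\<in>PS n. (norm (v ((p \<circ> Transposition.transpose 0 k) k)))\<^sup>2)"
      unfolding C_def using PS_swap_sum[of 0 n k] that by blast
    also have "\<dots> = C 0" unfolding C_def by simp
    finally show ?thesis .
  qed
  have "(\<Sum>k<n. C k) = (\<Sum>p\<in>PS n. \<Sum>k<n. (norm (v (p k)))\<^sup>2)"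
    unfolding C_def by (rule sum.swap)
  also have "\<dots> = (\<Sum>p\<in>PS n. \<Sum>a<n. (norm (v a))\<^sup>2)"
  proof (rule sum.cong[OF refl])
    fix p assume "p \<in> PS n"
    then have "p permutes {..<n}" by simp
    from sum.permute[OF this, of "\<lambda>a. (norm (v a))\<^sup>2"]
    show "(\<Sum>k<n. (norm (v (p k)))\<^sup>2) = (\<Sum>a<n. (norm (v a))\<^sup>2)" by (simp add: comp_def)
  qed
  also have "\<dots> = real (card (PS n)) * (\<Sum>a<n. (norm (v a))\<^sup>2)" by simp
  finally have s: "(\<Sum>k<n. C k) = real (card (PS n)) * (\<Sum>a<n. (norm (v a))\<^sup>2)" .
  have "(\<Sum>k<n. C k) = (\<Sum>k<n. C 0)" by (rule sum.cong[OF refl]) (rule eq, simp)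
  then have "(\<Sum>k<n. C k) = real n * C 0" by simp
  with s have "C 0 = real (card (PS n)) * (\<Sum>a<n. (norm (v a))\<^sup>2) / real n"
    using assms by (simp add: field_simps)
  then show ?thesis using eq[OF assms] unfolding C_def by simp
qed

lemma PS_offdiag:
  fixes v :: "nat \<Rightarrow> 'a::real_inner"
  assumes "j < n" "k < n" "j \<noteq> k" and sum0: "(\<Sum>a<n. v a) = 0"
  shows "(\<Sum>p\<in>PS n. inner (v (p j)) (v (p k))) \<le> 0"
proof -
  define C where "C k = (\<Sum>p\<in>PS n. inner (v (p j)) (v (p k)))" for k
  have eq: "C k' = C k" if "k' < n" "k' \<noteq> j" for k'
  proof -
    have "C k' = (\<Sum>p\<in>PS n. inner (v ((p \<circ> Transposition.transpose k k') j)) (v ((p \<circ> Transposition.transpose k k') k')))"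
      unfolding C_def using PS_swap_sum[of k n k'] that assms by blast
    also have "\<dots> = C k" unfolding C_def using that assms by (simp add: transpose_def)
    finally show ?thesis .
  qed
  have "(\<Sum>k'<n. C k') = (\<Sum>p\<in>PS n. \<Sum>k'<n. inner (v (p j)) (v (p k')))"
    unfolding C_def by (rule sum.swap)
  also have "\<dots> = (\<Sum>p\<in>PS n. inner (v (p j)) (\<Sum>a<n. v a))"
  proof (rule sum.cong[OF refl])
    fix p assume "p \<in> PS n"
    then have "p permutes {..<n}" by simp
    from sum.permute[OF this, of "\<lambda>a. v a"]
    show "(\<Sum>k'<n. inner (v (p j)) (v (p k'))) = inner (v (p j)) (\<Sum>a<n. v a)"
      by (simp add: comp_def inner_sum_right)
  qed
  also have "\<dots> = 0" using sum0 by simp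
  finally have s0: "(\<Sum>k'<n. C k') = 0" .
  have split: "(\<Sum>k'<n. C k') = C j + (\<Sum>k'\<in>{..<n} - {j}. C k')"
    using assms by (simp add: sum.remove)
  have "(\<Sum>k'\<in>{..<n} - {j}. C k') = (\<Sum>k'\<in>{..<n} - {j}. C k)"
    by (rule sum.cong[OF refl]) (rule eq, auto)
  also have "\<dots> = real (n - 1) * C k" using assms by simp
  finally have s1: "(\<Sum>k'\<in>{..<n} - {j}. C k') = real (n - 1) * C k" .
  have "C j \<ge> 0" unfolding C_def by (intro sum_nonneg) simp
  with s0 split s1 have "real (n - 1) * C k \<le> 0" by linarith
  moreover have "real (n - 1) > 0" using assms by auto
  ultimately have "C k \<le> 0" by (simp add: mult_le_0_iff)
  then show ?thesis unfolding C_def .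
qed

lemma PS_partial:
  fixes v :: "nat \<Rightarrow> 'a::real_inner"
  assumes "i \<le> n" and sum0: "(\<Sum>a<n. v a) = 0"
  shows "(\<Sum>p\<in>PS n. (norm (\<Sum>j<i. v (p j)))\<^sup>2)
     \<le> real (card (PS n)) * real i * ((\<Sum>a<n. (norm (v a))\<^sup>2) / real n)"
proof -
  have "(\<Sum>p\<in>PS n. (norm (\<Sum>j<i. v (p j)))\<^sup>2)
      = (\<Sum>p\<in>PS n. \<Sum>j<i. \<Sum>k<i. inner (v (p k)) (v (p j)))"
    by (simp add: power2_norm_eq_inner inner_sum_left inner_sum_right)
  also have "\<dots> = (\<Sum>j<i. \<Sum>k<i. \<Sum>p\<in>PS n. inner (v (p k)) (v (p j)))"
    by (subst sum.swap) (intro sum.cong refl sum.swap)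
  also have "\<dots> \<le> (\<Sum>j<i. \<Sum>p\<in>PS n. inner (v (p j)) (v (p j)))"
  proof (rule sum_mono)
    fix j assume j: "j \<in> {..<i}"
    have "(\<Sum>k<i. \<Sum>p\<in>PS n. inner (v (p k)) (v (p j)))
       = (\<Sum>p\<in>PS n. inner (v (p j)) (v (p j))) + (\<Sum>k\<in>{..<i}-{j}. \<Sum>p\<in>PS n. inner (v (p k)) (v (p j)))"
      using j by (simp add: sum.remove)
    also have "(\<Sum>k\<in>{..<i}-{j}. \<Sum>p\<in>PS n. inner (v (p k)) (v (p j))) \<le> 0"
    proof (rule sum_nonpos)
      fix k assume k: "k \<in> {..<i}-{j}"
      show "(\<Sum>p\<in>PS n. inner (v (p k)) (v (p j))) \<le> 0"
        by (rule PS_offdiag[OF _ _ _ sum0]) (use j k assms(1) in auto)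
    qed
    finally show "(\<Sum>k<i. \<Sum>p\<in>PS n. inner (v (p k)) (v (p j))) \<le> (\<Sum>p\<in>PS n. inner (v (p j)) (v (p j)))"
      by simp
  qed
  also have "\<dots> = (\<Sum>j<i. real (card (PS n)) * (\<Sum>a<n. (norm (v a))\<^sup>2) / real n)"
  proof (intro sum.cong refl)
    fix j assume "j \<in> {..<i}"
    then have "j < n" using assms(1) by simp
    from PS_diag[OF this, of v]
    show "(\<Sum>p\<in>PS n. inner (v (p j)) (v (p j))) = real (card (PS n)) * (\<Sum>a<n. (norm (v a))\<^sup>2) / real n"
      by (simp add: power2_norm_eq_inner)
  qed
  also have "\<dots> = real (card (PS n)) * real i * ((\<Sum>a<n. (norm (v a))\<^sup>2) / real n)"
    by simp
  finally show ?thesis .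
qed

lemma seg_inner_Suc':
  "seg_inner Fs g1 g2 p z (Suc i) = seg_inner Fs g1 g2 p z i
     - g1 *\<^sub>R Fs (p i) (seg_inner Fs g1 g2 p z i - g2 *\<^sub>R Fs (p i) (seg_inner Fs g1 g2 p z i))"
  by (simp add: Let_def)

lemma norm_sub_scaleR_sq:
  fixes d v :: "'a::real_inner"
  shows "(norm (d - t *\<^sub>R v))\<^sup>2 = (norm d)\<^sup>2 - 2 * t * inner v d + t\<^sup>2 * (norm v)\<^sup>2"
proof -
  have "(norm (d - t *\<^sub>R v))\<^sup>2 = inner (d - t *\<^sub>R v) (d - t *\<^sub>R v)" by (rule power2_norm_eq_inner)
  also have "\<dots> = inner d d - 2 * t * inner v d + t\<^sup>2 * inner v v"
    by (simp add: inner_diff_left inner_diff_right inner_commute power2_eq_square algebra_simps)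
  finally show ?thesis by (simp add: power2_norm_eq_inner)
qed

lemma epoch_pointwise:
  fixes Fs :: "nat \<Rightarrow> 'a::real_inner \<Rightarrow> 'a" and F :: "'a \<Rightarrow> 'a"
  assumes n1: "n \<ge> 1" and p: "p permutes {..<n}"
    and F_def: "\<And>z. F z = (1 / real n) *\<^sub>R (\<Sum>i<n. Fs i z)"
    and lip: "\<And>i x y. i < n \<Longrightarrow> norm (Fs i x - Fs i y) \<le> L * norm (x - y)"
    and Flip: "norm (F w - F zs) \<le> L * norm (w - zs)"
    and mono: "inner (F w - F zs) (w - zs) \<ge> \<mu> * (norm (w - zs))\<^sup>2"
    and sol: "F zs = 0" and mu: "\<mu> > 0" and muL: "\<mu> \<le> L"
    and g: "\<gamma> > 0" and s1: "real n * \<gamma> * L \<le> 1/20" and s2: "real n * \<gamma> * L\<^sup>2 \<le> \<mu> / 10"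
  shows "norm (seg_inner Fs \<gamma> (2*\<gamma>) p w n - zs) \<le> (1 - \<mu> * real n * \<gamma> / 2) * norm (w - zs)
           + \<gamma>\<^sup>2 * L * (2 * (\<Sum>i<n. norm (\<Sum>j<i. Fs (p j) zs)) + 3 * (\<Sum>a<n. norm (Fs a zs)))"
proof -
  define z where "z i = seg_inner Fs \<gamma> (2*\<gamma>) p w i" for i
  define zb where "zb i = z i - (2*\<gamma>) *\<^sub>R Fs (p i) (z i)" for i
  define r where "r = norm (w - zs)"
  define D where "D i = norm (z i - w)" for i
  define P where "P i = (\<Sum>j<i. Fs (p j) zs)" for i
  define S where "S = (\<Sum>a<n. norm (Fs a zs))"
  define SP where "SP = (\<Sum>i<n. norm (P i))"
  define Z where "Z = (\<Sum>i<n. norm (zb i - w))"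
  have L0: "L \<ge> 0" using mu muL by simp
  have r0: "r \<ge> 0" unfolding r_def by simp
  have S0: "S \<ge> 0" unfolding S_def by (simp add: sum_nonneg)
  have SP0: "SP \<ge> 0" unfolding SP_def by (simp add: sum_nonneg)
  have Z0: "Z \<ge> 0" unfolding Z_def by (simp add: sum_nonneg)
  have pin: "p i < n" if "i < n" for i using permutes_in_image[OF p] that by simp
  have zsuc: "z (Suc i) = z i - \<gamma> *\<^sub>R Fs (p i) (zb i)" for i
    unfolding z_def zb_def by (rule seg_inner_Suc')
  have zsum: "z i = w - \<gamma> *\<^sub>R (\<Sum>j<i. Fs (p j) (zb j))" for i
  proof (induction i)
    case 0 then show ?case by (simp add: z_def)
  next
    case (Suc i) then show ?case by (simp add: zsuc algebra_simps)
  qed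
  have Fb: "norm (Fs a x) \<le> norm (Fs a zs) + L * norm (x - zs)" if "a < n" for a x
  proof -
    have "norm (Fs a x) \<le> norm (Fs a x - Fs a zs) + norm (Fs a zs)"
      using norm_triangle_ineq[of "Fs a x - Fs a zs" "Fs a zs"] by simp
    with lip[OF that, of x zs] show ?thesis by linarith
  qed
  have zbw: "norm (zb i - w) \<le> (1 + 2*\<gamma>*L) * D i + 2*\<gamma>*norm (Fs (p i) zs) + 2*\<gamma>*L*r" if "i < n" for i
  proof -
    have "zb i - w = (z i - w) - (2*\<gamma>) *\<^sub>R Fs (p i) (z i)" unfolding zb_def by simp
    then have "norm (zb i - w) \<le> D i + 2*\<gamma> * norm (Fs (p i) (z i))"
      unfolding D_def using g by (metis abs_of_pos mult_pos_pos norm_scaleR norm_triangle_ineq4 zero_less_numeral)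
    also have "norm (Fs (p i) (z i)) \<le> norm (Fs (p i) zs) + L * norm (z i - zs)" by (rule Fb[OF pin[OF that]])
    also have "norm (z i - zs) \<le> D i + r" unfolding D_def r_def
      using norm_triangle_ineq[of "z i - w" "w - zs"] by simp
    finally have "norm (zb i - w) \<le> D i + 2*\<gamma> * (norm (Fs (p i) zs) + L * (D i + r))"
      using g L0 by (simp add: mult_left_mono)
    then show ?thesis by (simp add: algebra_simps)
  qed
  have Dbound: "D i \<le> \<gamma> * norm (P i) + \<gamma> * L * (Z + real n * r)" if "i \<le> n" for i
  proof -
    have "z i - w = - (\<gamma> *\<^sub>R (P i + (\<Sum>j<i. Fs (p j) (zb j) - Fs (p j) zs)))"
      unfolding zsum P_def by (simp add: sum_subtractf)
    then have "D i = \<gamma> * norm (P i + (\<Sum>j<i. Fs (p j) (zb j) - Fs (p j) zs))"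
      unfolding D_def using g by simp
    also have "norm (P i + (\<Sum>j<i. Fs (p j) (zb j) - Fs (p j) zs)) \<le> norm (P i) + (\<Sum>j<i. norm (Fs (p j) (zb j) - Fs (p j) zs))"
      using norm_triangle_ineq[of "P i" "\<Sum>j<i. Fs (p j) (zb j) - Fs (p j) zs"]
        norm_sum[of "\<lambda>j. Fs (p j) (zb j) - Fs (p j) zs" "{..<i}"] by linarith
    also have "(\<Sum>j<i. norm (Fs (p j) (zb j) - Fs (p j) zs)) \<le> (\<Sum>j<i. L * (norm (zb j - w) + r))"
    proof (rule sum_mono)
      fix j assume "j \<in> {..<i}"
      then have j: "j < n" using that by simp
      have "norm (Fs (p j) (zb j) - Fs (p j) zs) \<le> L * norm (zb j - zs)" by (rule lip[OF pin[OF j]])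
      also have "norm (zb j - zs) \<le> norm (zb j - w) + r" unfolding r_def
        using norm_triangle_ineq[of "zb j - w" "w - zs"] by simp
      finally show "norm (Fs (p j) (zb j) - Fs (p j) zs) \<le> L * (norm (zb j - w) + r)"
        using L0 by (simp add: mult_left_mono)
    qed
    also have "(\<Sum>j<i. L * (norm (zb j - w) + r)) \<le> (\<Sum>j<n. L * (norm (zb j - w) + r))"
      using that L0 r0 by (intro sum_mono2) auto
    also have "(\<Sum>j<n. L * (norm (zb j - w) + r)) = L * (Z + real n * r)"
      unfolding Z_def by (simp add: sum_distrib_left[symmetric] sum.distrib)
    finally show ?thesis using g by (simp add: mult_left_mono distrib_left mult.assoc)
  qed
  define c where "c = 1 + 2*\<gamma>*L"
  define a where "a = real n * \<gamma> * L"
  have gL: "\<gamma> * L \<le> a"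
  proof -
    have "\<gamma> * L * 1 \<le> \<gamma> * L * real n" using n1 g L0 by (intro mult_left_mono) auto
    then show ?thesis unfolding a_def by (simp add: algebra_simps)
  qed
  have c11: "c \<le> (11/10)" unfolding c_def using gL s1 a_def by linarith
  have c1: "c \<ge> 1" unfolding c_def using g L0 by simp
  have a0: "a \<ge> 0" unfolding a_def using g L0 by simp
  have ca: "c * a \<le> (11/200)"
  proof -
    have "c * a \<le> (11/10) * (1/20)" using c11 s1 a0 unfolding a_def by (intro mult_mono) auto
    then show ?thesis by simp
  qed
  have sumD: "(\<Sum>i<n. D i) \<le> \<gamma> * SP + a * Z + real n ^ 2 * \<gamma> * L * r"
  proof -
    have "(\<Sum>i<n. D i) \<le> (\<Sum>i<n. \<gamma> * norm (P i) + \<gamma> * L * (Z + real n * r))"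
      using Dbound by (intro sum_mono) auto
    also have "\<dots> = \<gamma> * SP + a * Z + real n ^ 2 * \<gamma> * L * r"
      unfolding SP_def a_def by (simp add: sum.distrib sum_distrib_left[symmetric] algebra_simps power2_eq_square)
    finally show ?thesis .
  qed
  have sumS: "(\<Sum>i<n. norm (Fs (p i) zs)) = S"
    unfolding S_def using sum.permute[OF p, of "\<lambda>a. norm (Fs a zs)"] by (simp add: comp_def)
  have Zb: "Z \<le> c * (\<Sum>i<n. D i) + 2*\<gamma>*S + 2 * a * r"
  proof -
    have "Z \<le> (\<Sum>i<n. c * D i + 2*\<gamma>*norm (Fs (p i) zs) + 2*\<gamma>*L*r)"
      unfolding Z_def c_def using zbw by (intro sum_mono) auto
    also have "\<dots> = c * (\<Sum>i<n. D i) + 2*\<gamma>*S + 2 * a * r"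
      unfolding a_def by (simp add: sum.distrib sum_distrib_left[symmetric] sumS algebra_simps)
    finally show ?thesis .
  qed
  define R where "R = (11/10) * \<gamma> * SP + 2*\<gamma>*S + ((11/10) * real n ^ 2 + 2 * real n) * \<gamma> * L * r"
  have Z1: "Z \<le> R + c * a * Z"
  proof -
    have "c * (\<Sum>i<n. D i) \<le> c * (\<gamma> * SP + a * Z + real n ^ 2 * \<gamma> * L * r)"
      using sumD c1 by (intro mult_left_mono) auto
    also have "\<dots> = c * \<gamma> * SP + c * a * Z + c * real n ^ 2 * \<gamma> * L * r" by (simp add: algebra_simps)
    also have "c * \<gamma> * SP \<le> (11/10) * \<gamma> * SP" using c11 g SP0 by (intro mult_right_mono) auto
    also have "c * real n ^ 2 * \<gamma> * L * r \<le> (11/10) * real n ^ 2 * \<gamma> * L * r"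
      using c11 g L0 r0 by (intro mult_right_mono) auto
    finally have "c * (\<Sum>i<n. D i) \<le> (11/10) * \<gamma> * SP + c * a * Z + (11/10) * real n ^ 2 * \<gamma> * L * r" by simp
    moreover have "2 * a * r = 2 * real n * \<gamma> * L * r" unfolding a_def by simp
    moreover have "R = (11/10)*\<gamma>*SP + 2*\<gamma>*S + (11/10)*real n^2*\<gamma>*L*r + 2*real n*\<gamma>*L*r"
      unfolding R_def by (simp add: algebra_simps)
    ultimately show ?thesis using Zb by linarith
  qed
  have "c * a * Z \<le> (11/200) * Z" using ca Z0 by (intro mult_right_mono) auto
  with Z1 have R0: "R \<ge> 0" using Z0 by linarith
  from Z1 \<open>c * a * Z \<le> (11/200) * Z\<close> R0 have Z2: "Z \<le> (106/100) * R" by linarith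
  have gLZ: "\<gamma> * L * Z \<le> \<gamma>\<^sup>2 * L * (2 * SP + 3 * S) + (7/2) * (real n ^ 2 * \<gamma>\<^sup>2 * L\<^sup>2) * r"
  proof -
    have "\<gamma> * L * Z \<le> \<gamma> * L * ((106/100) * R)" using Z2 g L0 by (intro mult_left_mono) auto
    also have "\<dots> = \<gamma>\<^sup>2 * L * ((1166/1000) * SP + (212/100) * S) + (106/100) * ((11/10) * real n ^ 2 + 2 * real n) * (\<gamma>\<^sup>2 * L\<^sup>2) * r"
      unfolding R_def by (simp add: algebra_simps power2_eq_square)
    also have "\<gamma>\<^sup>2 * L * ((1166/1000) * SP + (212/100) * S) \<le> \<gamma>\<^sup>2 * L * (2 * SP + 3 * S)"
      using SP0 S0 L0 by (intro mult_left_mono) auto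
    also have "(106/100) * ((11/10) * real n ^ 2 + 2 * real n) \<le> (7/2) * real n ^ 2"
    proof -
      have "real n \<le> real n ^ 2" using n1 by (simp add: power2_eq_square)
      moreover have "(106/100) * ((11/10) * real n ^ 2 + 2 * real n) = (1166/1000) * real n ^ 2 + (212/100) * real n"
        by (simp add: algebra_simps)
      ultimately show ?thesis by linarith
    qed
    then have "(106/100) * ((11/10) * real n ^ 2 + 2 * real n) * (\<gamma>\<^sup>2 * L\<^sup>2) * r \<le> (7/2) * real n ^ 2 * (\<gamma>\<^sup>2 * L\<^sup>2) * r"
      using r0 by (intro mult_right_mono) auto
    finally show ?thesis by (simp add: algebra_simps)
  qed
  define x where "x = \<mu> * real n * \<gamma>"
  define y where "y = real n ^ 2 * \<gamma>\<^sup>2 * L\<^sup>2"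
  have y10: "y \<le> x / 10"
  proof -
    have "y = (real n * \<gamma>) * (real n * \<gamma> * L\<^sup>2)" unfolding y_def by (simp add: power2_eq_square algebra_simps)
    also have "\<dots> \<le> (real n * \<gamma>) * (\<mu> / 10)" using s2 g by (intro mult_left_mono) auto
    finally show ?thesis unfolding x_def by (simp add: mult.commute mult.left_commute)
  qed
  have x0: "x \<ge> 0" unfolding x_def using mu g by simp
  have xs: "x \<le> 1/20"
  proof -
    have "x \<le> L * real n * \<gamma>" unfolding x_def using muL g by (intro mult_right_mono) auto
    then show ?thesis using s1 by (simp add: algebra_simps)
  qed
  define u where "u = (w - zs) - (real n * \<gamma>) *\<^sub>R F w"
  have Fw: "norm (F w) \<le> L * r" using Flip sol unfolding r_def by simp
  have mw: "inner (F w) (w - zs) \<ge> \<mu> * r\<^sup>2" using mono sol unfolding r_def by simp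
  have u2: "(norm u)\<^sup>2 \<le> ((1 - x + y/2) * r)\<^sup>2"
  proof -
    have "(norm u)\<^sup>2 = r\<^sup>2 - 2 * (real n * \<gamma>) * inner (F w) (w - zs) + (real n * \<gamma>)\<^sup>2 * (norm (F w))\<^sup>2"
      unfolding u_def r_def by (rule norm_sub_scaleR_sq)
    also have "\<dots> \<le> r\<^sup>2 - 2 * (real n * \<gamma>) * (\<mu> * r\<^sup>2) + (real n * \<gamma>)\<^sup>2 * (L * r)\<^sup>2"
    proof -
      have "2 * (real n * \<gamma>) * (\<mu> * r\<^sup>2) \<le> 2 * (real n * \<gamma>) * inner (F w) (w - zs)"
        using mw g by (intro mult_left_mono) auto
      moreover have "(norm (F w))\<^sup>2 \<le> (L * r)\<^sup>2" using Fw by (simp add: power_mono)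
      then have "(real n * \<gamma>)\<^sup>2 * (norm (F w))\<^sup>2 \<le> (real n * \<gamma>)\<^sup>2 * (L * r)\<^sup>2"
        by (intro mult_left_mono) auto
      ultimately show ?thesis by linarith
    qed
    also have "\<dots> = (1 - 2 * x + y) * r\<^sup>2" unfolding x_def y_def by (simp add: algebra_simps power2_eq_square)
    also have "\<dots> \<le> (1 - x + y/2)\<^sup>2 * r\<^sup>2"
    proof -
      have "(1 - x + y/2)\<^sup>2 - (1 - 2 * x + y) = (x - y/2)\<^sup>2" by (simp add: algebra_simps power2_eq_square)
      then have "1 - 2 * x + y \<le> (1 - x + y/2)\<^sup>2" by (smt (verit) zero_le_power2)
      then show ?thesis by (intro mult_right_mono) auto
    qed
    finally show ?thesis by (simp add: power_mult_distrib)
  qed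
  have un: "norm u \<le> (1 - x + y/2) * r"
  proof -
    have y0: "y \<ge> 0" unfolding y_def by simp
    have "0 \<le> 1 - x + y/2" using xs y0 by linarith
    then have "0 \<le> (1 - x + y/2) * r" using r0 by simp
    then show ?thesis using power2_le_imp_le[OF u2] by simp
  qed
  define e where "e = (\<Sum>i<n. Fs (p i) (zb i) - Fs (p i) w)"
  have sumF: "(\<Sum>i<n. Fs (p i) w) = real n *\<^sub>R F w"
  proof -
    have "(\<Sum>i<n. Fs (p i) w) = (\<Sum>a<n. Fs a w)"
      using sum.permute[OF p, of "\<lambda>a. Fs a w"] by (simp add: comp_def)
    also have "\<dots> = real n *\<^sub>R F w" using F_def[of w] n1 by simp
    finally show ?thesis .
  qed
  have zn: "z n - zs = u - \<gamma> *\<^sub>R e"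
  proof -
    have "(\<Sum>j<n. Fs (p j) (zb j)) = real n *\<^sub>R F w + e"
      unfolding e_def using sumF by (simp add: sum_subtractf)
    then show ?thesis unfolding zsum u_def by (simp add: algebra_simps)
  qed
  have en: "norm e \<le> L * Z"
  proof -
    have "norm e \<le> (\<Sum>i<n. norm (Fs (p i) (zb i) - Fs (p i) w))" unfolding e_def by (rule norm_sum)
    also have "\<dots> \<le> (\<Sum>i<n. L * norm (zb i - w))" using lip pin by (intro sum_mono) auto
    also have "\<dots> = L * Z" unfolding Z_def by (simp add: sum_distrib_left)
    finally show ?thesis .
  qed
  have "norm (z n - zs) \<le> norm u + \<gamma> * norm e"
    unfolding zn using g by (metis abs_of_pos norm_scaleR norm_triangle_ineq4)
  also have "\<gamma> * norm e \<le> \<gamma> * (L * Z)" using en g by (intro mult_left_mono) auto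
  finally have "norm (z n - zs) \<le> (1 - x + y/2) * r + (\<gamma>\<^sup>2 * L * (2 * SP + 3 * S) + (7/2) * y * r)"
    using un gLZ unfolding y_def by (simp add: mult.assoc)
  also have "(1 - x + y/2) * r + (7/2) * y * r \<le> (1 - x/2) * r"
  proof -
    have "(1 - x + y/2) * r + (7/2) * y * r = (1 - x + 4 * y) * r" by (simp add: algebra_simps)
    also have "\<dots> \<le> (1 - x/2) * r" using y10 x0 r0 by (intro mult_right_mono) auto
    finally show ?thesis .
  qed
  then have "(1 - x + y/2) * r + (\<gamma>\<^sup>2 * L * (2 * SP + 3 * S) + (7/2) * y * r) \<le> (1 - x/2) * r + \<gamma>\<^sup>2 * L * (2 * SP + 3 * S)"
    by simp
  finally show ?thesis unfolding z_def x_def r_def SP_def P_def S_def by simp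
qed

lemma young_sq:
  fixes A B x :: real
  assumes "x > 0"
  shows "(A + B)\<^sup>2 \<le> (1 + x/2) * A\<^sup>2 + (1 + 2/x) * B\<^sup>2"
proof -
  have "0 \<le> (x/2) * (A - 2*B/x)\<^sup>2" using assms by simp
  also have "(x/2) * (A - 2*B/x)\<^sup>2 = x/2 * A\<^sup>2 - 2*A*B + 2/x * B\<^sup>2"
    using assms by (simp add: power2_eq_square field_simps)
  finally show ?thesis by (simp add: power2_eq_square algebra_simps)
qed

lemma epoch_sq:
  fixes Fs :: "nat \<Rightarrow> 'a::real_inner \<Rightarrow> 'a" and F :: "'a \<Rightarrow> 'a"
  assumes n1: "n \<ge> 1" and p: "p permutes {..<n}"
    and F_def: "\<And>z. F z = (1 / real n) *\<^sub>R (\<Sum>i<n. Fs i z)"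
    and lip: "\<And>i x y. i < n \<Longrightarrow> norm (Fs i x - Fs i y) \<le> L * norm (x - y)"
    and Flip: "norm (F w - F zs) \<le> L * norm (w - zs)"
    and mono: "inner (F w - F zs) (w - zs) \<ge> \<mu> * (norm (w - zs))\<^sup>2"
    and sol: "F zs = 0" and mu: "\<mu> > 0" and muL: "\<mu> \<le> L"
    and g: "\<gamma> > 0" and s1: "real n * \<gamma> * L \<le> 1/20" and s2: "real n * \<gamma> * L\<^sup>2 \<le> \<mu> / 10"
  shows "(norm (seg_inner Fs \<gamma> (2*\<gamma>) p w n - zs))\<^sup>2 \<le> (1 - \<mu> * real n * \<gamma> / 4) * (norm (w - zs))\<^sup>2
           + \<gamma>^3 * L\<^sup>2 / \<mu> * (24 * (\<Sum>i<n. (norm (\<Sum>j<i. Fs (p j) zs))\<^sup>2) + 54 * (\<Sum>a<n. (norm (Fs a zs))\<^sup>2))"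
proof -
  define x where "x = \<mu> * real n * \<gamma>"
  define r where "r = norm (w - zs)"
  define SP where "SP = (\<Sum>i<n. norm (\<Sum>j<i. Fs (p j) zs))"
  define S where "S = (\<Sum>a<n. norm (Fs a zs))"
  define P2 where "P2 = (\<Sum>i<n. (norm (\<Sum>j<i. Fs (p j) zs))\<^sup>2)"
  define S2 where "S2 = (\<Sum>a<n. (norm (Fs a zs))\<^sup>2)"
  define A where "A = (1 - x/2) * r"
  define B where "B = \<gamma>\<^sup>2 * L * (2 * SP + 3 * S)"
  have L0: "L \<ge> 0" using mu muL by simp
  have r0: "r \<ge> 0" unfolding r_def by simp
  have S0: "S \<ge> 0" unfolding S_def by (simp add: sum_nonneg)
  have SP0: "SP \<ge> 0" unfolding SP_def by (simp add: sum_nonneg)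
  have x0: "x > 0" unfolding x_def using mu g n1 by simp
  have xs: "x \<le> 1/20"
  proof -
    have "x \<le> L * real n * \<gamma>" unfolding x_def using muL g by (intro mult_right_mono) auto
    then show ?thesis using s1 by (simp add: algebra_simps)
  qed
  have A0: "A \<ge> 0" unfolding A_def using xs r0 by simp
  have B0: "B \<ge> 0" unfolding B_def using L0 S0 SP0 by simp
  have N: "norm (seg_inner Fs \<gamma> (2*\<gamma>) p w n - zs) \<le> A + B"
    using epoch_pointwise[OF n1 p F_def lip Flip mono sol mu muL g s1 s2]
    unfolding A_def B_def x_def r_def SP_def S_def by simp
  then have "(norm (seg_inner Fs \<gamma> (2*\<gamma>) p w n - zs))\<^sup>2 \<le> (A + B)\<^sup>2"
    by (intro power_mono) auto
  also have "\<dots> \<le> (1 + x/2) * A\<^sup>2 + (1 + 2/x) * B\<^sup>2" by (rule young_sq[OF x0])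
  also have "(1 + x/2) * A\<^sup>2 \<le> (1 - x/4) * r\<^sup>2"
  proof -
    have xx: "0 \<le> x * x" by simp
    have h: "(x * x) * x \<le> x * x" using x0 xs xx by (intro mult_left_le) auto
    have eq: "(1 + x/2) * (1 - x/2)\<^sup>2 = 1 - x/2 - (x*x)/4 + ((x*x)*x)/8"
      by (simp add: power2_eq_square algebra_simps)
    have "(1 + x/2) * (1 - x/2)\<^sup>2 \<le> 1 - x/4"
      unfolding eq using h xx x0 by linarith
    then have "(1 + x/2) * (1 - x/2)\<^sup>2 * r\<^sup>2 \<le> (1 - x/4) * r\<^sup>2" by (intro mult_right_mono) auto
    then show ?thesis unfolding A_def by (simp add: power_mult_distrib mult.assoc)
  qed
  also have "(1 + 2/x) * B\<^sup>2 \<le> (3/x) * B\<^sup>2"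
  proof -
    have "1 \<le> 1/x" using x0 xs by simp
    then have "1 + 2/x \<le> 3/x" by simp
    then show ?thesis by (intro mult_right_mono) auto
  qed
  also have "B\<^sup>2 \<le> \<gamma>^4 * L\<^sup>2 * (8 * real n * P2 + 18 * real n * S2)"
  proof -
    have c1: "SP\<^sup>2 \<le> P2 * real n" unfolding SP_def P2_def using sum_squared_le_sum_of_squares[of _ "{..<n}"] by simp
    have c2: "S\<^sup>2 \<le> S2 * real n" unfolding S_def S2_def using sum_squared_le_sum_of_squares[of _ "{..<n}"] by simp
    have "(2 * SP + 3 * S)\<^sup>2 \<le> 8 * SP\<^sup>2 + 18 * S\<^sup>2"
    proof -
      have "0 \<le> (2 * SP - 3 * S)\<^sup>2" by simp
      then show ?thesis by (simp add: power2_eq_square algebra_simps)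
    qed
    also have "\<dots> \<le> 8 * real n * P2 + 18 * real n * S2" using c1 c2 by (simp add: algebra_simps)
    finally have "(2 * SP + 3 * S)\<^sup>2 \<le> 8 * real n * P2 + 18 * real n * S2" .
    then have "(\<gamma>\<^sup>2 * L)\<^sup>2 * (2 * SP + 3 * S)\<^sup>2 \<le> (\<gamma>\<^sup>2 * L)\<^sup>2 * (8 * real n * P2 + 18 * real n * S2)"
      by (intro mult_left_mono) auto
    then show ?thesis unfolding B_def by (simp add: power_mult_distrib power2_eq_square power4_eq_xxxx algebra_simps)
  qed
  then have "(3/x) * B\<^sup>2 \<le> (3/x) * (\<gamma>^4 * L\<^sup>2 * (8 * real n * P2 + 18 * real n * S2))"
    using x0 by (intro mult_left_mono) auto
  also have "\<dots> = \<gamma>^3 * L\<^sup>2 / \<mu> * (24 * P2 + 54 * S2)"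
    unfolding x_def using mu g n1 by (simp add: field_simps power2_eq_square power3_eq_cube power4_eq_xxxx)
  finally show ?thesis unfolding x_def r_def P2_def S2_def by (simp add: mult.assoc)
qed

lemma epoch_avg:
  fixes Fs :: "nat \<Rightarrow> 'a::real_inner \<Rightarrow> 'a" and F :: "'a \<Rightarrow> 'a"
  assumes n1: "n \<ge> 1"
    and F_def: "\<And>z. F z = (1 / real n) *\<^sub>R (\<Sum>i<n. Fs i z)"
    and lip: "\<And>i x y. i < n \<Longrightarrow> norm (Fs i x - Fs i y) \<le> L * norm (x - y)"
    and Flip: "norm (F w - F zs) \<le> L * norm (w - zs)"
    and mono: "inner (F w - F zs) (w - zs) \<ge> \<mu> * (norm (w - zs))\<^sup>2"
    and sol: "F zs = 0" and mu: "\<mu> > 0" and muL: "\<mu> \<le> L"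
    and g: "\<gamma> > 0" and s1: "real n * \<gamma> * L \<le> 1/20" and s2: "real n * \<gamma> * L\<^sup>2 \<le> \<mu> / 10"
  shows "(\<Sum>p\<in>PS n. (norm (seg_inner Fs \<gamma> (2*\<gamma>) p w n - zs))\<^sup>2)
    \<le> real (card (PS n)) * ((1 - \<mu> * real n * \<gamma> / 4) * (norm (w - zs))\<^sup>2
        + 24 * real n * (29 + real n) * \<gamma>^3 * L\<^sup>2 * ((1 / real n) * (\<Sum>a<n. (norm (Fs a zs))\<^sup>2)) / \<mu>)"
proof -
  define K where "K = \<gamma>^3 * L\<^sup>2 / \<mu>"
  define S2 where "S2 = (\<Sum>a<n. (norm (Fs a zs))\<^sup>2)"
  define r2 where "r2 = (norm (w - zs))\<^sup>2"
  define q where "q = 1 - \<mu> * real n * \<gamma> / 4"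
  define P2 where "P2 p = (\<Sum>i<n. (norm (\<Sum>j<i. Fs (p j) zs))\<^sup>2)" for p :: "nat \<Rightarrow> nat"
  define C where "C = real (card (PS n))"
  have K0: "K \<ge> 0" unfolding K_def using g mu by simp
  have S20: "S2 \<ge> 0" unfolding S2_def by (simp add: sum_nonneg)
  have sum0: "(\<Sum>a<n. Fs a zs) = 0"
  proof -
    have "(1 / real n) *\<^sub>R (\<Sum>a<n. Fs a zs) = 0" using F_def[of zs] sol by simp
    then show ?thesis using n1 by simp
  qed
  have "(\<Sum>p\<in>PS n. (norm (seg_inner Fs \<gamma> (2*\<gamma>) p w n - zs))\<^sup>2)
      \<le> (\<Sum>p\<in>PS n. q * r2 + K * (24 * P2 p + 54 * S2))"
  proof (rule sum_mono)
    fix p assume "p \<in> PS n"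
    then have p: "p permutes {..<n}" by simp
    show "(norm (seg_inner Fs \<gamma> (2*\<gamma>) p w n - zs))\<^sup>2 \<le> q * r2 + K * (24 * P2 p + 54 * S2)"
      using epoch_sq[OF n1 p F_def lip Flip mono sol mu muL g s1 s2]
      unfolding q_def r2_def K_def P2_def S2_def by simp
  qed
  also have "\<dots> = (\<Sum>p\<in>PS n. (q * r2 + K * 54 * S2) + (K * 24) * P2 p)"
    by (rule sum.cong) (simp_all add: algebra_simps)
  also have "\<dots> = C * (q * r2 + K * 54 * S2) + (K * 24) * (\<Sum>p\<in>PS n. P2 p)"
    unfolding C_def by (simp add: sum.distrib sum_distrib_left)
  also have "\<dots> = C * (q * r2) + K * (24 * (\<Sum>p\<in>PS n. P2 p) + C * 54 * S2)"
    by (simp add: algebra_simps)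
  also have "(\<Sum>p\<in>PS n. P2 p) \<le> C * real n * S2"
  proof -
    have "(\<Sum>p\<in>PS n. P2 p) = (\<Sum>i<n. \<Sum>p\<in>PS n. (norm (\<Sum>j<i. Fs (p j) zs))\<^sup>2)"
      unfolding P2_def by (rule sum.swap)
    also have "\<dots> \<le> (\<Sum>i<n. C * S2)"
    proof (rule sum_mono)
      fix i assume i: "i \<in> {..<n}"
      have "(\<Sum>p\<in>PS n. (norm (\<Sum>j<i. Fs (p j) zs))\<^sup>2) \<le> C * real i * (S2 / real n)"
        unfolding C_def S2_def using PS_partial[of i n "\<lambda>a. Fs a zs"] i sum0 by simp
      also have "\<dots> \<le> C * real n * (S2 / real n)"
        using i S20 unfolding C_def by (intro mult_right_mono mult_left_mono) auto
      also have "\<dots> = C * S2" using n1 by simp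
      finally show "(\<Sum>p\<in>PS n. (norm (\<Sum>j<i. Fs (p j) zs))\<^sup>2) \<le> C * S2" .
    qed
    also have "\<dots> = C * real n * S2" by simp
    finally show ?thesis .
  qed
  finally have "(\<Sum>p\<in>PS n. (norm (seg_inner Fs \<gamma> (2*\<gamma>) p w n - zs))\<^sup>2)
      \<le> C * (q * r2) + K * (24 * (C * real n * S2) + C * 54 * S2)"
    using K0 by (simp add: mult_left_mono)
  also have "\<dots> \<le> C * (q * r2 + 24 * real n * (29 + real n) * \<gamma>^3 * L\<^sup>2 * ((1 / real n) * S2) / \<mu>)"
  proof -
    have C0: "C \<ge> 0" unfolding C_def by simp
    have "K * (24 * (C * real n * S2) + C * 54 * S2) = C * (K * S2) * (24 * real n + 54)"
      by (simp add: algebra_simps)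
    also have "\<dots> \<le> C * (K * S2) * (24 * (29 + real n))"
      using C0 K0 S20 by (intro mult_left_mono) auto
    also have "\<dots> = C * (24 * real n * (29 + real n) * \<gamma>^3 * L\<^sup>2 * ((1 / real n) * S2) / \<mu>)"
    proof -
      have nz: "real n > 0" using n1 by simp
      show ?thesis unfolding K_def using nz mu by (simp add: field_simps)
    qed
    finally show ?thesis by (simp add: algebra_simps)
  qed
  finally show ?thesis unfolding C_def q_def r2_def S2_def .
qed

lemma seg_rr_dep:
  assumes "\<And>j. j < k \<Longrightarrow> ps j = ps' j"
  shows "seg_rr n Fs g1 g2 ps z0 k = seg_rr n Fs g1 g2 ps' z0 k"
  using assms by (induction k) auto

lemma perm_seqs_finite: "finite (perm_seqs n K)"
  unfolding perm_seqs_def by (intro finite_PiE) (auto intro: finite_permutations)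

lemma perm_seqs_ne: "perm_seqs n K \<noteq> {}"
proof -
  have "(\<lambda>k\<in>{..K}. id) \<in> perm_seqs n K" unfolding perm_seqs_def by (auto simp: permutes_id)
  then show ?thesis by blast
qed

lemma perm_seqs_decomp:
  assumes k: "k \<le> K"
  shows "(\<Sum>ps\<in>perm_seqs n K. f ps)
    = (\<Sum>g\<in>({..K} - {k}) \<rightarrow>\<^sub>E PS n. \<Sum>y\<in>PS n. f (g(k := y)))"
proof -
  define S where "S = {..K} - {k}"
  have ins: "{..K} = insert k S" unfolding S_def using k by auto
  have kS: "k \<notin> S" unfolding S_def by simp
  have eq: "perm_seqs n K = (\<lambda>(y, g). g(k := y)) ` (PS n \<times> (S \<rightarrow>\<^sub>E PS n))"
    unfolding perm_seqs_def ins by (rule PiE_insert_eq)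
  have inj: "inj_on (\<lambda>(y, g). g(k := y)) (PS n \<times> (S \<rightarrow>\<^sub>E PS n))"
    using inj_combinator[OF kS, of "\<lambda>_. PS n"] by simp
  have "(\<Sum>ps\<in>perm_seqs n K. f ps) = (\<Sum>yg\<in>PS n \<times> (S \<rightarrow>\<^sub>E PS n). f (case yg of (y, g) \<Rightarrow> g(k := y)))"
    unfolding eq by (subst sum.reindex[OF inj]) (simp add: comp_def)
  also have "\<dots> = (\<Sum>y\<in>PS n. \<Sum>g\<in>S \<rightarrow>\<^sub>E PS n. f (g(k := y)))"
    unfolding sum.cartesian_product by (rule sum.cong) auto
  also have "\<dots> = (\<Sum>g\<in>S \<rightarrow>\<^sub>E PS n. \<Sum>y\<in>PS n. f (g(k := y)))"
    by (rule sum.swap)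
  finally show ?thesis unfolding S_def .
qed

lemma avg_step:
  assumes k: "k \<le> K"
    and st: "\<And>ps p. st (ps(k := p)) = st ps"
    and nxt: "\<And>ps. f ps = h (st ps) (ps k)"
    and bound: "\<And>w. (\<Sum>p\<in>PS n. h w p) \<le> real (card (PS n)) * (q * \<phi> w + N)"
    and phi: "\<And>ps. R ps = \<phi> (st ps)"
  shows "(\<Sum>ps\<in>perm_seqs n K. f ps) \<le> q * (\<Sum>ps\<in>perm_seqs n K. R ps) + N * real (card (perm_seqs n K))"
proof -
  define G where "G = ({..K} - {k}) \<rightarrow>\<^sub>E PS n"
  define C where "C = real (card (PS n))"
  have "(\<Sum>ps\<in>perm_seqs n K. f ps) = (\<Sum>g\<in>G. \<Sum>y\<in>PS n. h (st g) y)"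
    unfolding G_def perm_seqs_decomp[OF k] by (simp add: nxt st)
  also have "\<dots> \<le> (\<Sum>g\<in>G. C * (q * \<phi> (st g) + N))"
    unfolding C_def by (intro sum_mono bound)
  also have "\<dots> = q * (\<Sum>g\<in>G. C * \<phi> (st g)) + N * (\<Sum>g\<in>G. C)"
    by (simp add: sum.distrib sum_distrib_left algebra_simps)
  also have "(\<Sum>g\<in>G. C * \<phi> (st g)) = (\<Sum>ps\<in>perm_seqs n K. R ps)"
    unfolding G_def perm_seqs_decomp[OF k] C_def by (simp add: phi st)
  also have "(\<Sum>g\<in>G. C) = real (card (perm_seqs n K))"
  proof -
    have "real (card (perm_seqs n K)) = (\<Sum>ps\<in>perm_seqs n K. 1)" by simp
    also have "\<dots> = (\<Sum>g\<in>G. C)"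
      unfolding G_def perm_seqs_decomp[OF k] C_def by simp
    finally show ?thesis by simp
  qed
  finally show ?thesis .
qed

lemma phase1:
  fixes a :: "nat \<Rightarrow> real"
  assumes step: "\<And>k. k < m \<Longrightarrow> a (Suc k) \<le> Q * a k + N" and Q0: "0 \<le> Q" and Q1: "Q < 1" and N0: "N \<ge> 0"
  shows "a m \<le> Q ^ m * a 0 + N / (1 - Q)"
  using step
proof (induction m)
  case 0
  have "0 \<le> N / (1 - Q)" using N0 Q1 by simp
  then show ?case by simp
next
  case (Suc m)
  then have IH: "a m \<le> Q ^ m * a 0 + N / (1 - Q)" by simp
  have "a (Suc m) \<le> Q * a m + N" using Suc.prems by simp
  also have "\<dots> \<le> Q * (Q ^ m * a 0 + N / (1 - Q)) + N" using IH Q0 by (simp add: mult_left_mono)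
  also have "\<dots> = Q ^ Suc m * a 0 + N / (1 - Q)" using Q1 by (simp add: field_simps)
  finally show ?case .
qed

lemma phase2:
  fixes a :: "nat \<Rightarrow> real"
  assumes step: "\<And>k. m \<le> k \<Longrightarrow> k < M \<Longrightarrow> (real k + 1)\<^sup>2 * a (Suc k) \<le> (real k)\<^sup>2 * a k + B"
    and mM: "m \<le> M"
  shows "(real M)\<^sup>2 * a M \<le> (real m)\<^sup>2 * a m + (real M - real m) * B"
  using step mM
proof (induction M)
  case 0 then show ?case by simp
next
  case (Suc M)
  show ?case
  proof (cases "m = Suc M")
    case True then show ?thesis by simp
  next
    case False
    then have mM: "m \<le> M" using Suc.prems by simp
    have IH: "(real M)\<^sup>2 * a M \<le> (real m)\<^sup>2 * a m + (real M - real m) * B"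
      using Suc.IH Suc.prems mM by simp
    have "(real (Suc M))\<^sup>2 * a (Suc M) \<le> (real M)\<^sup>2 * a M + B"
      using Suc.prems(1)[of M] mM by (simp add: add.commute)
    with IH show ?thesis by (simp add: algebra_simps)
  qed
qed

lemma phase2_step:
  fixes \<mu> n k g Lm \<sigma> a a' :: real
  assumes a0: "a \<ge> 0" and rec: "a' \<le> (1 - \<mu> * n * g / 4) * a + 24 * n * (29 + n) * g ^ 3 * Lm\<^sup>2 * \<sigma> / \<mu>"
    and gdef: "g = 4 * (2 * k + 1) / (\<mu> * (k + 1)\<^sup>2)" and mu: "\<mu> > 0" and s0: "\<sigma> \<ge> 0"
    and n1: "1 \<le> n" and nk: "n \<le> k + 1" and k0: "k \<ge> 0"
  shows "(k + 1)\<^sup>2 * a' \<le> k\<^sup>2 * a + 96 * Lm\<^sup>2 * (29 + n) * \<sigma> / \<mu>\<^sup>2 * (128 / \<mu>\<^sup>2)"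
proof -
  define t where "t = \<mu> * g"
  have t: "t * (k + 1)\<^sup>2 = 4 * (2 * k + 1)" unfolding t_def gdef using mu k0 by (simp add: field_simps)
  have kp: "(k + 1)\<^sup>2 > 0" using k0 by simp
  have t0: "t \<ge> 0" unfolding t_def gdef using mu k0 by simp
  have q: "(k + 1)\<^sup>2 * (1 - \<mu> * n * g / 4) \<le> k\<^sup>2"
  proof -
    have "(k + 1)\<^sup>2 * (1 - \<mu> * n * g / 4) = (k + 1)\<^sup>2 - n * (t * (k + 1)\<^sup>2) / 4"
      unfolding t_def by (simp add: algebra_simps)
    also have "\<dots> = (k + 1)\<^sup>2 - n * (2 * k + 1)" unfolding t by simp
    also have "\<dots> \<le> (k + 1)\<^sup>2 - (2 * k + 1)"
    proof -
      have "1 * (2 * k + 1) \<le> n * (2 * k + 1)" using n1 k0 by (intro mult_right_mono) auto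
      then show ?thesis by simp
    qed
    also have "\<dots> = k\<^sup>2" by (simp add: power2_eq_square algebra_simps)
    finally show ?thesis .
  qed
  have t8: "t * (k + 1) \<le> 8"
  proof -
    have e: "(t * (k + 1)) * (k + 1) = t * (k + 1)\<^sup>2" by (simp add: power2_eq_square mult.assoc)
    have "(t * (k + 1)) * (k + 1) \<le> 8 * (k + 1)" unfolding e t using k0 by simp
    moreover have "(0::real) < k + 1" using k0 by simp
    ultimately show ?thesis by (rule mult_right_le_imp_le)
  qed
  have tc: "n * (t ^ 3 * (k + 1)\<^sup>2) \<le> 512"
  proof -
    have "t ^ 3 * (k + 1)\<^sup>2 = (t * (k + 1)\<^sup>2) * t\<^sup>2" by (simp add: power2_eq_square power3_eq_cube)
    also have "\<dots> \<le> (8 * (k + 1)) * t\<^sup>2" using t k0 by (intro mult_right_mono) auto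
    finally have A: "t ^ 3 * (k + 1)\<^sup>2 \<le> 8 * (k + 1) * t\<^sup>2" .
    have "(t * (k + 1))\<^sup>2 \<le> 8\<^sup>2" using t8 t0 k0 by (intro power_mono) auto
    then have B: "(k + 1) * ((k + 1) * t\<^sup>2) \<le> 64" by (simp add: power2_eq_square algebra_simps)
    have "n * (t ^ 3 * (k + 1)\<^sup>2) \<le> (k + 1) * (8 * (k + 1) * t\<^sup>2)"
      by (rule mult_mono[OF nk A]) (use k0 t0 in auto)
    also have "\<dots> = 8 * ((k + 1) * ((k + 1) * t\<^sup>2))" by (simp add: algebra_simps)
    also have "\<dots> \<le> 8 * 64" using B by simp
    finally show ?thesis by simp
  qed
  have "(k + 1)\<^sup>2 * a' \<le> (k + 1)\<^sup>2 * ((1 - \<mu> * n * g / 4) * a + 24 * n * (29 + n) * g ^ 3 * Lm\<^sup>2 * \<sigma> / \<mu>)"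
    using rec kp by (intro mult_left_mono) auto
  also have "\<dots> = ((k + 1)\<^sup>2 * (1 - \<mu> * n * g / 4)) * a + 24 * (29 + n) * Lm\<^sup>2 * \<sigma> / \<mu>^4 * (n * (t ^ 3 * (k + 1)\<^sup>2))"
    unfolding t_def using mu by (simp add: field_simps power3_eq_cube power2_eq_square power4_eq_xxxx)
  also have "\<dots> \<le> k\<^sup>2 * a + 24 * (29 + n) * Lm\<^sup>2 * \<sigma> / \<mu>^4 * 512"
  proof (rule add_mono)
    show "(k + 1)\<^sup>2 * (1 - \<mu> * n * g / 4) * a \<le> k\<^sup>2 * a" using q a0 by (intro mult_right_mono) auto
    have "24 * (29 + n) * Lm\<^sup>2 * \<sigma> / \<mu>^4 \<ge> 0" using n1 s0 mu by simp
    then show "24 * (29 + n) * Lm\<^sup>2 * \<sigma> / \<mu>^4 * (n * (t ^ 3 * (k + 1)\<^sup>2)) \<le> 24 * (29 + n) * Lm\<^sup>2 * \<sigma> / \<mu>^4 * 512"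
      using tc by (intro mult_left_mono) auto
  qed
  also have "\<dots> = k\<^sup>2 * a + 96 * Lm\<^sup>2 * (29 + n) * \<sigma> / \<mu>\<^sup>2 * (128 / \<mu>\<^sup>2)"
    using mu by (simp add: field_simps power2_eq_square power4_eq_xxxx)
  finally show ?thesis .
qed

lemma rhs_aux:
  fixes m d ks E r0 L2 n \<sigma> g2 K :: real
  assumes "m > 0" "d > 0"
  shows "ks * E / d * r0 + 96 * L2 * (29 + n) * \<sigma> / (m * d) * (g2 * ks + 128 / m * K)
    = (ks * (E * r0) + (ks * (96 * (29 + n) * g2 * L2 * \<sigma> / m) + K * (96 * L2 * (29 + n) * \<sigma> / m * (128 / m)))) / d"
  using assms by (simp add: field_simps)

theorem theorem4:
  fixes n :: nat and Fs :: "nat \<Rightarrow> 'a::euclidean_space \<Rightarrow> 'a" and F :: "'a \<Rightarrow> 'a"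
    and L :: "nat \<Rightarrow> real" and \<mu> :: real and zs z0 :: 'a
    and Lmax \<sigma>sq g1max :: real and kstar :: nat
    and g1 g2 :: "nat \<Rightarrow> real" and K :: nat
  assumes n_pos: "n \<ge> 1"
    and F_def: "\<And>z. F z = (1 / real n) *\<^sub>R (\<Sum>i<n. Fs i z)"
    and mu_pos: "\<mu> > 0"
    and strongly_monotone: "\<And>z1 z2. inner (F z1 - F z2) (z1 - z2) \<ge> \<mu> * (norm (z1 - z2))\<^sup>2"
    and lipschitz: "\<And>i. i < n \<Longrightarrow> (L i)-lipschitz_on UNIV (Fs i)"
    and sol: "F zs = 0"
    and Lmax_def: "Lmax = Max (L ` {..<n})"
    and sigma_def: "\<sigma>sq = (1 / real n) * (\<Sum>i<n. (norm (Fs i zs))\<^sup>2)"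
    and g1max_def: "g1max = \<mu> / (10 * Lmax\<^sup>2 * sqrt (10 * real n ^ 2 + 2 * real n + 54))"
    and kstar_def: "kstar = nat \<lceil>64 / (\<mu>\<^sup>2 * g1max\<^sup>2)\<rceil>"
    and g1_def: "\<And>k. g1 k = (if k < kstar then g1max
                      else 4 * (2 * real k + 1) / (\<mu> * (real k + 1)\<^sup>2))"
    and g2_def: "\<And>k. g2 k = 2 * g1 k"
    and K_ge: "K \<ge> kstar"
  shows "expect_perms n K (\<lambda>ps. (norm (seg_rr n Fs g1 g2 ps z0 (Suc K) - zs))\<^sup>2)
    \<le> (real kstar)\<^sup>2 * exp (- (\<mu> * real n * g1max / 4)) / (real K + 1)\<^sup>2 * (norm (z0 - zs))\<^sup>2
       + 96 * Lmax\<^sup>2 * (29 + real n) * \<sigma>sq / (\<mu>\<^sup>2 * (real K + 1)\<^sup>2)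
         * (g1max\<^sup>2 * (real kstar)\<^sup>2 + 128 / \<mu>\<^sup>2 * real K)"
proof -
  define \<gamma> where "\<gamma> = g1max"
  have nR: "real n \<ge> 1" using n_pos by simp
  have fin: "finite (L ` {..<n})" by simp
  have Lle: "L i \<le> Lmax" if "i < n" for i unfolding Lmax_def using fin that by (intro Max_ge) auto
  have lipL: "norm (Fs i x - Fs i y) \<le> Lmax * norm (x - y)" if "i < n" for i x y
  proof -
    have "norm (Fs i x - Fs i y) \<le> L i * norm (x - y)"
      by (rule lipschitz_on_normD[OF lipschitz[OF that]]) auto
    also have "\<dots> \<le> Lmax * norm (x - y)" using Lle[OF that] by (intro mult_right_mono) auto
    finally show ?thesis .
  qed
  have Flip: "norm (F x - F y) \<le> Lmax * norm (x - y)" for x y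
  proof -
    have "F x - F y = (1 / real n) *\<^sub>R (\<Sum>i<n. Fs i x - Fs i y)"
      using F_def by (simp add: sum_subtractf scaleR_diff_right)
    then have "norm (F x - F y) = (1 / real n) * norm (\<Sum>i<n. Fs i x - Fs i y)" by simp
    also have "\<dots> \<le> (1 / real n) * (\<Sum>i<n. Lmax * norm (x - y))"
      by (intro mult_left_mono order_trans[OF norm_sum sum_mono] lipL) auto
    also have "\<dots> = Lmax * norm (x - y)" using n_pos by simp
    finally show ?thesis .
  qed
  have muL: "\<mu> \<le> Lmax"
  proof -
    obtain b :: 'a where b: "b \<in> Basis" using nonempty_Basis by blast
    then have b0: "norm b > 0" using nonzero_Basis by auto
    have "\<mu> * (norm b)\<^sup>2 \<le> inner (F (zs + b) - F zs) b"
      using strongly_monotone[of "zs + b" zs] by simp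
    also have "\<dots> \<le> norm (F (zs + b) - F zs) * norm b" by (rule Cauchy_Schwarz_ineq2[THEN abs_le_D1])
    also have "\<dots> \<le> (Lmax * norm b) * norm b" using Flip[of "zs + b" zs] by (intro mult_right_mono) auto
    finally have "\<mu> * (norm b)\<^sup>2 \<le> Lmax * (norm b)\<^sup>2" by (simp add: power2_eq_square mult.assoc)
    then show ?thesis using b0 by simp
  qed
  have Lpos: "Lmax > 0" using muL mu_pos by simp
  have sq: "sqrt (10 * real n ^ 2 + 2 * real n + 54) \<ge> 3 * real n"
    by (rule real_le_rsqrt) (simp add: power2_eq_square)
  have sqpos: "sqrt (10 * real n ^ 2 + 2 * real n + 54) > 0"
  proof -
    have "0 \<le> 10 * real n ^ 2 + 2 * real n" by simp
    then have "0 < 10 * real n ^ 2 + 2 * real n + 54" by linarith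
    then show ?thesis by simp
  qed
  have g0: "\<gamma> > 0" unfolding \<gamma>_def g1max_def using mu_pos Lpos sqpos by simp
  have hA: "real n * \<gamma> * Lmax\<^sup>2 \<le> \<mu> / 30"
  proof -
    have "real n * \<gamma> * Lmax\<^sup>2 = \<mu> * real n / (10 * sqrt (10 * real n ^ 2 + 2 * real n + 54))"
      unfolding \<gamma>_def g1max_def using Lpos sqpos by (simp add: field_simps)
    also have "\<dots> \<le> \<mu> * real n / (10 * (3 * real n))"
      using sq nR mu_pos sqpos by (intro divide_left_mono mult_left_mono) auto
    also have "\<dots> = \<mu> / 30" using nR by simp
    finally show ?thesis .
  qed
  have hB: "real n * \<gamma> * Lmax \<le> 1 / 30"
  proof -
    have "(real n * \<gamma> * Lmax) * Lmax \<le> \<mu> / 30" using hA by (simp add: power2_eq_square mult.assoc)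
    also have "\<dots> \<le> Lmax / 30" using muL by simp
    finally have "(real n * \<gamma> * Lmax) * Lmax \<le> (1/30) * Lmax" by simp
    then show ?thesis using Lpos by (simp add: mult_le_cancel_right)
  qed
  define t where "t = \<mu> * \<gamma>"
  have t0: "t > 0" unfolding t_def using mu_pos g0 by simp
  have tn: "real n * t \<le> 1 / 30"
  proof -
    have "real n * t \<le> real n * \<gamma> * Lmax" unfolding t_def using muL g0 nR
      by (simp add: mult_right_mono mult.commute mult.left_commute)
    then show ?thesis using hB by simp
  qed
  have ks: "real kstar \<ge> 64 / t\<^sup>2"
    unfolding kstar_def t_def \<gamma>_def by (simp add: power_mult_distrib)
  have ks1: "kstar \<ge> 1"
  proof -
    have "64 / t\<^sup>2 > 0" using t0 by simp
    then have "real kstar > 0" using ks by linarith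
    then show ?thesis by simp
  qed
  have tle: "t \<le> 1 / 30"
  proof -
    have "1 * t \<le> real n * t" using nR t0 by (intro mult_right_mono) auto
    then show ?thesis using tn by simp
  qed
  have ksn: "real kstar \<ge> real n"
  proof -
    have "(real n * t)\<^sup>2 \<le> (1/30)\<^sup>2" using tn nR t0 by (intro power_mono) auto
    moreover have "(1/30::real)\<^sup>2 \<le> 1" by (simp add: power2_eq_square)
    ultimately have h1: "real n ^ 2 * t\<^sup>2 \<le> 1" by (simp add: power_mult_distrib)
    have "real n \<le> real n ^ 2" using nR by (simp add: power2_eq_square)
    then have "real n * t\<^sup>2 \<le> real n ^ 2 * t\<^sup>2" by (intro mult_right_mono) auto
    with h1 have "real n * t\<^sup>2 \<le> 64" by linarith
    then have "real n \<le> 64 / t\<^sup>2" using t0 by (simp add: field_simps)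
    then show ?thesis using ks by linarith
  qed
  have gpos: "g1 k > 0" for k
    using g1_def[of k] g0 mu_pos unfolding \<gamma>_def by simp
  have gle: "g1 k \<le> \<gamma>" for k
  proof (cases "k < kstar")
    case True then show ?thesis using g1_def[of k] unfolding \<gamma>_def by simp
  next
    case False
    then have kk: "real k + 1 \<ge> real kstar" by simp
    have gk: "g1 k = 4 * (2 * real k + 1) / (\<mu> * (real k + 1)\<^sup>2)" using g1_def[of k] False by simp
    have kp: "real k + 1 > 0" by simp
    have A: "(\<mu> * g1 k) * (real k + 1) \<le> 8"
    proof -
      have kp2: "(real k + 1)\<^sup>2 \<noteq> 0" using kp by simp
      have e: "(\<mu> * g1 k) * (real k + 1)\<^sup>2 = 4 * (2 * real k + 1)"
        unfolding gk using mu_pos kp2 by simp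
      have "((\<mu> * g1 k) * (real k + 1)) * (real k + 1) \<le> 8 * (real k + 1)"
        using e by (simp add: power2_eq_square mult.assoc)
      then show ?thesis using kp by (rule mult_right_le_imp_le)
    qed
    have B: "8 \<le> t * (real k + 1)"
    proof -
      have "t * (64 / t\<^sup>2) \<le> t * (real k + 1)" using ks kk t0 by (intro mult_left_mono) auto
      moreover have "t * (64 / t\<^sup>2) = 64 / t" using t0 by (simp add: power2_eq_square)
      moreover have "8 \<le> 64 / t" using t0 tle by (simp add: field_simps)
      ultimately show ?thesis by linarith
    qed
    from A B have "(\<mu> * g1 k) * (real k + 1) \<le> (\<mu> * \<gamma>) * (real k + 1)" unfolding t_def by linarith
    then have "\<mu> * g1 k \<le> \<mu> * \<gamma>" using kp by (rule mult_right_le_imp_le)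
    then show ?thesis using mu_pos by simp
  qed
  have s1k: "real n * g1 k * Lmax \<le> 1/20" for k
  proof -
    have "real n * g1 k * Lmax \<le> real n * \<gamma> * Lmax" using gle[of k] nR Lpos by (intro mult_right_mono mult_left_mono) auto
    then show ?thesis using hB by simp
  qed
  have s2k: "real n * g1 k * Lmax\<^sup>2 \<le> \<mu> / 10" for k
  proof -
    have "real n * g1 k * Lmax\<^sup>2 \<le> real n * \<gamma> * Lmax\<^sup>2" using gle[of k] nR by (intro mult_right_mono mult_left_mono) auto
    then show ?thesis using hA mu_pos by simp
  qed
  define Sm where "Sm k = (\<Sum>ps\<in>perm_seqs n K. (norm (seg_rr n Fs g1 g2 ps z0 k - zs))\<^sup>2)" for k
  define C where "C = real (card (perm_seqs n K))"
  have C0: "C > 0" unfolding C_def using perm_seqs_finite perm_seqs_ne by (simp add: card_gt_0_iff)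
  define a where "a k = Sm k / C" for k
  have a_nn: "a k \<ge> 0" for k unfolding a_def Sm_def using C0 by (simp add: sum_nonneg)
  have a_0: "a 0 = (norm (z0 - zs))\<^sup>2" unfolding a_def Sm_def C_def using C0 unfolding C_def by simp
  have rec: "a (Suc k) \<le> (1 - \<mu> * real n * g1 k / 4) * a k + 24 * real n * (29 + real n) * (g1 k)^3 * Lmax\<^sup>2 * \<sigma>sq / \<mu>"
    if kK: "k \<le> K" for k
  proof -
    have "Sm (Suc k) \<le> (1 - \<mu> * real n * g1 k / 4) * Sm k + (24 * real n * (29 + real n) * (g1 k)^3 * Lmax\<^sup>2 * \<sigma>sq / \<mu>) * C"
      unfolding Sm_def C_def
    proof (rule avg_step[OF kK, where st="\<lambda>ps. seg_rr n Fs g1 g2 ps z0 k"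
          and h="\<lambda>w p. (norm (seg_inner Fs (g1 k) (2 * g1 k) p w n - zs))\<^sup>2"
          and \<phi>="\<lambda>w. (norm (w - zs))\<^sup>2"])
      fix ps :: "nat \<Rightarrow> nat \<Rightarrow> nat" and p
      show "seg_rr n Fs g1 g2 (ps(k := p)) z0 k = seg_rr n Fs g1 g2 ps z0 k"
        by (rule seg_rr_dep) simp
    next
      fix ps :: "nat \<Rightarrow> nat \<Rightarrow> nat"
      show "(norm (seg_rr n Fs g1 g2 ps z0 (Suc k) - zs))\<^sup>2
          = (norm (seg_inner Fs (g1 k) (2 * g1 k) (ps k) (seg_rr n Fs g1 g2 ps z0 k) n - zs))\<^sup>2"
        by (simp add: g2_def)
    next
      fix w :: 'a
      show "(\<Sum>p\<in>PS n. (norm (seg_inner Fs (g1 k) (2 * g1 k) p w n - zs))\<^sup>2)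
          \<le> real (card (PS n)) * ((1 - \<mu> * real n * g1 k / 4) * (norm (w - zs))\<^sup>2
              + 24 * real n * (29 + real n) * (g1 k)^3 * Lmax\<^sup>2 * \<sigma>sq / \<mu>)"
        using epoch_avg[OF n_pos F_def lipL Flip[of w zs] strongly_monotone[of w zs] sol mu_pos muL gpos[of k] s1k[of k] s2k[of k]]
        unfolding sigma_def by simp
    next
      fix ps :: "nat \<Rightarrow> nat \<Rightarrow> nat"
      show "(norm (seg_rr n Fs g1 g2 ps z0 k - zs))\<^sup>2 = (norm (seg_rr n Fs g1 g2 ps z0 k - zs))\<^sup>2" ..
    qed
    then show ?thesis unfolding a_def using C0 by (simp add: field_simps)
  qed
  have sig0: "\<sigma>sq \<ge> 0" unfolding sigma_def by (simp add: sum_nonneg)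
  define Q where "Q = 1 - \<mu> * real n * \<gamma> / 4"
  define N1 where "N1 = 24 * real n * (29 + real n) * \<gamma>^3 * Lmax\<^sup>2 * \<sigma>sq / \<mu>"
  have xq: "\<mu> * real n * \<gamma> \<le> 1/30" using tn unfolding t_def by (simp add: mult.commute mult.left_commute)
  have xq0: "\<mu> * real n * \<gamma> > 0" using mu_pos nR g0 by simp
  have Q0: "0 \<le> Q" unfolding Q_def using xq by simp
  have Q1: "Q < 1" unfolding Q_def using xq0 by simp
  have N10: "N1 \<ge> 0" unfolding N1_def using mu_pos g0 sig0 by simp
  have ph1: "a kstar \<le> Q ^ kstar * a 0 + N1 / (1 - Q)"
  proof (rule phase1[OF _ Q0 Q1 N10])
    fix k assume "k < kstar"
    then show "a (Suc k) \<le> Q * a k + N1"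
      using rec[of k] K_ge g1_def[of k] unfolding Q_def N1_def \<gamma>_def by simp
  qed
  have QE: "Q ^ kstar \<le> exp (- (\<mu> * real n * g1max / 4))"
  proof -
    have "Q ^ kstar \<le> Q ^ 1" using Q0 Q1 ks1 by (intro power_decreasing) auto
    also have "\<dots> \<le> exp (- (\<mu> * real n * g1max / 4))"
      using exp_ge_add_one_self[of "- (\<mu> * real n * g1max / 4)"] unfolding Q_def \<gamma>_def by simp
    finally show ?thesis .
  qed
  have NQ: "N1 / (1 - Q) = 96 * (29 + real n) * \<gamma>\<^sup>2 * Lmax\<^sup>2 * \<sigma>sq / \<mu>\<^sup>2"
    unfolding N1_def Q_def using mu_pos g0 nR by (simp add: field_simps power2_eq_square power3_eq_cube)
  define E where "E = exp (- (\<mu> * real n * g1max / 4))"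
  define r0 where "r0 = (norm (z0 - zs))\<^sup>2"
  define P1 where "P1 = 96 * (29 + real n) * \<gamma>\<^sup>2 * Lmax\<^sup>2 * \<sigma>sq / \<mu>\<^sup>2"
  have aks: "a kstar \<le> E * r0 + P1"
  proof -
    have "Q ^ kstar * a 0 \<le> E * a 0" using QE a_nn[of 0] unfolding E_def by (intro mult_right_mono) auto
    then show ?thesis using ph1 NQ a_0 unfolding P1_def r0_def by simp
  qed
  define Mc where "Mc = 96 * Lmax\<^sup>2 * (29 + real n) * \<sigma>sq / \<mu>\<^sup>2 * (128 / \<mu>\<^sup>2)"
  have Mc0: "Mc \<ge> 0" unfolding Mc_def using sig0 by simp
  have ph2: "(real (Suc K))\<^sup>2 * a (Suc K) \<le> (real kstar)\<^sup>2 * a kstar + (real (Suc K) - real kstar) * Mc"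
  proof (rule phase2)
    fix k assume k1: "kstar \<le> k" and k2: "k < Suc K"
    have gk: "g1 k = 4 * (2 * real k + 1) / (\<mu> * (real k + 1)\<^sup>2)" using g1_def[of k] k1 by simp
    have nk: "real n \<le> real k + 1" using ksn k1 by linarith
    show "(real k + 1)\<^sup>2 * a (Suc k) \<le> (real k)\<^sup>2 * a k + Mc"
      unfolding Mc_def
      by (rule phase2_step[OF a_nn rec[of k] gk mu_pos sig0 nR nk]) (use k2 in simp_all)
  next
    show "kstar \<le> Suc K" using K_ge by simp
  qed
  have fin1: "(real K + 1)\<^sup>2 * a (Suc K) \<le> (real kstar)\<^sup>2 * (E * r0) + ((real kstar)\<^sup>2 * P1 + real K * Mc)"
  proof -
    have "(real kstar)\<^sup>2 * a kstar \<le> (real kstar)\<^sup>2 * (E * r0 + P1)" using aks by (intro mult_left_mono) auto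
    moreover have "(real (Suc K) - real kstar) * Mc \<le> real K * Mc" using ks1 Mc0 by (intro mult_right_mono) auto
    ultimately show ?thesis using ph2 by (simp add: algebra_simps)
  qed
  have Kp: "(real K + 1)\<^sup>2 > 0" by simp
  have lhs: "expect_perms n K (\<lambda>ps. (norm (seg_rr n Fs g1 g2 ps z0 (Suc K) - zs))\<^sup>2) = a (Suc K)"
    unfolding expect_perms_def a_def Sm_def C_def ..
  have rhs: "(real kstar)\<^sup>2 * exp (- (\<mu> * real n * g1max / 4)) / (real K + 1)\<^sup>2 * (norm (z0 - zs))\<^sup>2
       + 96 * Lmax\<^sup>2 * (29 + real n) * \<sigma>sq / (\<mu>\<^sup>2 * (real K + 1)\<^sup>2)
         * (g1max\<^sup>2 * (real kstar)\<^sup>2 + 128 / \<mu>\<^sup>2 * real K)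
     = ((real kstar)\<^sup>2 * (E * r0) + ((real kstar)\<^sup>2 * P1 + real K * Mc)) / (real K + 1)\<^sup>2"
    unfolding E_def r0_def P1_def Mc_def \<gamma>_def
    using rhs_aux[of "\<mu>\<^sup>2" "(real K + 1)\<^sup>2" "(real kstar)\<^sup>2" "exp (- (\<mu> * real n * g1max / 4))"
        "(norm (z0 - zs))\<^sup>2" "Lmax\<^sup>2" "real n" "\<sigma>sq" "g1max\<^sup>2" "real K"] Kp mu_pos by simp
  show ?thesis unfolding lhs rhs using fin1 Kp by (simp add: field_simps)

qed

end
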